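(* Assume the setting in the context, and let $\mathbf d^*$ be any $\Phi_{\mathfrak B}$-optimal design with $\boldsymbol\Sigma^*=\mathbf M(\mathbf d^* )^{-1}=(c^*_{jk})$. Then for all $j,k\in\{1,\dots,m\}$ with $j\ne k$, writing $\mathbf E_{jk}=(\mathbf e_j,\mathbf e_k)$: $$|c^*_{jk}|\le\frac{\alpha}{2}K\,\lambda_{\max}\big(\mathbf E_{jk}'(\mathbf B\mathbf B')^{-1}\mathbf E_{jk}\big),$$ $$|c^*_{jk}|\le\frac{\alpha}{2}\lambda_{\max}\big(\mathbf E_{jk}'\mathbf N^+(\mathbf w^{(jk+)})\mathbf E_{jk}\big),$$ $$|c^*_{jk}|\le\frac{\alpha}{2}\lambda_{\max}\big(\mathbf E_{jk}'\mathbf N^+(\mathbf w^{(jk* )})\mathbf E_{jk}\big).$$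
   Context: Let $n,m,N,K$ be positive integers with $2\le m\le N\le n$, and let $\mathbf f_1,\dots,\mathbf f_n\in\mathbb R^m$ span $\mathbb R^m$. A (binary) design is $\mathbf d\in\{0,1\}^n$ with $\sum_i d_i=N$; its information matrix is $\mathbf M(\mathbf d)=\sum_{i=1}^n d_i\mathbf f_i\mathbf f_i'$. For $\ell\in\{1,\dots,K\}$ let $\mathbf B_\ell$ be a real $m\times s_\ell$ matrix, $\mathbf B=(\mathbf B_1,\dots,\mathbf B_K)$, with column space of $\mathbf B$ equal to $\mathbb R^m$ and no zero column. For positive definite $\mathbf M$, $\Phi_{\mathfrak B}(\mathbf M)=\max_{\ell}\mathrm{tr}(\mathbf B_\ell'\mathbf M^{-1}\mathbf B_\ell)$. A $\Phi_{\mathfrak B}$-optimal design minimizes $\Phi_{\mathfrak B}(\mathbf M(\mathbf d))$ over designs $\mathbf d$ with nonsingular $\mathbf M(\mathbf d)$. Let $\mathbf d_0$ be a design with nonsingular $\mathbf M(\mathbf d_0)$ and $\alpha=\Phi_{\mathfrak B}(\mathbf M(\mathbf d_0))$. For $\mathbf w\in\mathbb R^K$, $\mathbf w\ge 0$, $\sum w_\ell=1$, let $\mathbf N(\mathbf w)=\sum_\ell w_\ell\mathbf B_\ell\mathbf B_\ell'$; $\mathbf A^+$ is the Moore–Penrose pseudoinverse, $\lambda_{\max}$ the largest eigenvalue, $\mathbf e_j$ the $j$-th unit vector. For $j\in\{1,\dots,m\}$: write $\mathbf B^+\mathbf e_j=((\mathbf h^{(j+)}_1)',\dots,(\mathbf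 h^{(j+)}_K)')'$ with $\mathbf h^{(j+)}_\ell\in\mathbb R^{s_\ell}$, and set $w^{(j+)}_\ell=\|\mathbf h^{(j+)}_\ell\|/\sum_{t}\|\mathbf h^{(j+)}_t\|$; $\mathbf w^{(j* )}$ is a minimizer of $\mathbf e_j'\mathbf N^+(\mathbf w)\mathbf e_j$ over all such $\mathbf w$ with $\mathbf e_j\in\mathcal C(\mathbf N(\mathbf w))$. Then $\mathbf w^{(jk+)}=\tfrac12(\mathbf w^{(j+)}+\mathbf w^{(k+)})$ and $\mathbf w^{(jk* )}=\tfrac12(\mathbf w^{(j* )}+\mathbf w^{(k* )})$. *)

theory Defs
  imports "HOL-Analysis.Analysis"
begin

definition outer :: "real^'m \<Rightarrow> real^'m^'m" where
  "outer x = (\<chi> a b. x$a * x$b)"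

definition info_mat :: "('i::finite \<Rightarrow> real^'m) \<Rightarrow> ('i \<Rightarrow> real) \<Rightarrow> real^'m^'m" where
  "info_mat f d = (\<Sum>i\<in>UNIV. d i *\<^sub>R outer (f i))"

definition is_design :: "nat \<Rightarrow> ('i::finite \<Rightarrow> real) \<Rightarrow> bool" where
  "is_design N d \<longleftrightarrow> (\<forall>i. d i = 0 \<or> d i = 1) \<and> (\<Sum>i\<in>UNIV. d i) = real N"

(* block B_l of B: the columns c of B with g c = l (other columns replaced by zero) *)
definition blk :: "real^'c^'m \<Rightarrow> ('c \<Rightarrow> 'k) \<Rightarrow> 'k \<Rightarrow> real^'c^'m" where
  "blk B g l = (\<chi> a c. if g c = l then B$a$c else 0)"

definition PhiB :: "real^'c^'m \<Rightarrow> ('c \<Rightarrow> 'k::finite) \<Rightarrow> real^'m^'m \<Rightarrow> real" where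
  "PhiB B g M = Max (range (\<lambda>l. trace (transpose (blk B g l) ** matrix_inv M ** blk B g l)))"

definition PhiB_optimal ::
  "('i::finite \<Rightarrow> real^'m) \<Rightarrow> nat \<Rightarrow> real^'c^'m \<Rightarrow> ('c \<Rightarrow> 'k::finite) \<Rightarrow> ('i \<Rightarrow> real) \<Rightarrow> bool" where
  "PhiB_optimal f N B g d \<longleftrightarrow> is_design N d \<and> invertible (info_mat f d) \<and>
     (\<forall>d'. is_design N d' \<and> invertible (info_mat f d') \<longrightarrow>
        PhiB B g (info_mat f d) \<le> PhiB B g (info_mat f d'))"

definition NN :: "real^'c^'m \<Rightarrow> ('c \<Rightarrow> 'k::finite) \<Rightarrow> ('k \<Rightarrow> real) \<Rightarrow> real^'m^'m" where
  "NN B g w = (\<Sum>l\<in>UNIV. w l *\<^sub>R (blk B g l ** transpose (blk B g l)))"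

definition simplex_wt :: "('k::finite \<Rightarrow> real) \<Rightarrow> bool" where
  "simplex_wt w \<longleftrightarrow> (\<forall>l. w l \<ge> 0) \<and> (\<Sum>l\<in>UNIV. w l) = 1"

definition pinv :: "real^'n^'m \<Rightarrow> real^'m^'n" where
  "pinv A = (THE X. A ** X ** A = A \<and> X ** A ** X = X \<and>
                    transpose (A ** X) = A ** X \<and> transpose (X ** A) = X ** A)"

definition lambda_max :: "real^'n^'n \<Rightarrow> real" where
  "lambda_max A = Max {l. \<exists>v. v \<noteq> 0 \<and> A *v v = l *\<^sub>R v}"

definition Emat :: "'m \<Rightarrow> 'm \<Rightarrow> real^2^'m" where
  "Emat j k = (\<chi> a b. if b = 1 then (if a = j then 1 else 0) else (if a = k then 1 else 0))"

definition wplus :: "real^'c^'m \<Rightarrow> ('c::finite \<Rightarrow> 'k::finite) \<Rightarrow> 'm \<Rightarrow> 'k \<Rightarrow> real" where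
  "wplus B g j = (let h = pinv B *v axis j 1;
                      nrm = (\<lambda>l. sqrt (\<Sum>c\<in>{c. g c = l}. (h$c)^2))
                  in (\<lambda>l. nrm l / (\<Sum>t\<in>UNIV. nrm t)))"

definition is_wstar :: "real^'c^'m \<Rightarrow> ('c \<Rightarrow> 'k::finite) \<Rightarrow> 'm \<Rightarrow> ('k \<Rightarrow> real) \<Rightarrow> bool" where
  "is_wstar B g j w \<longleftrightarrow> simplex_wt w \<and> axis j 1 \<in> range (\<lambda>x. NN B g w *v x) \<and>
     (\<forall>w'. simplex_wt w' \<and> axis j 1 \<in> range (\<lambda>x. NN B g w' *v x) \<longrightarrow>
        axis j 1 \<bullet> (pinv (NN B g w) *v axis j 1) \<le> axis j 1 \<bullet> (pinv (NN B g w') *v axis j 1))"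

end

theory Submission
  imports Defs
begin


lemma mmul_diff_left: "(A::real^'n^'m) ** (B - C) = A ** B - A ** C"
  by (simp add: matrix_eq matrix_vector_mul_assoc[symmetric] matrix_vector_mult_diff_rdistrib
      matrix_vector_mult_diff_distrib)

lemma mmul_diff_right: "((A::real^'n^'m) - B) ** C = A ** C - B ** C"
  by (simp add: matrix_eq matrix_vector_mul_assoc[symmetric] matrix_vector_mult_diff_rdistrib)

lemma mmul_add_right: "((A::real^'n^'m) + B) ** C = A ** C + B ** C"
  by (simp add: matrix_eq matrix_vector_mul_assoc[symmetric] matrix_vector_mult_add_rdistrib)

lemma transpose_diff: "transpose ((A::real^'n^'m) - B) = transpose A - transpose B"
  by (simp add: transpose_def vec_eq_iff)

lemma transpose_add: "transpose ((A::real^'n^'m) + B) = transpose A + transpose B"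
  by (simp add: transpose_def vec_eq_iff)

lemma minv:
  fixes A :: "real^'n^'n"
  assumes "invertible A"
  shows "A ** matrix_inv A = mat 1" "matrix_inv A ** A = mat 1"
proof -
  have "\<exists>A'. A ** A' = mat 1 \<and> A' ** A = mat 1" using assms invertible_def by blast
  hence "A ** matrix_inv A = mat 1 \<and> matrix_inv A ** A = mat 1"
    unfolding matrix_inv_def by (rule someI_ex)
  thus "A ** matrix_inv A = mat 1" "matrix_inv A ** A = mat 1" by auto
qed

lemma invertible_ker:
  fixes A :: "real^'n^'n"
  assumes "\<And>x. A *v x = 0 \<Longrightarrow> x = 0"
  shows "invertible A"
  using assms matrix_left_invertible_ker invertible_left_inverse by metis

lemma minv_sym:
  fixes A :: "real^'n^'n"
  assumes "invertible A" "transpose A = A"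
  shows "transpose (matrix_inv A) = matrix_inv A"
proof -
  have "transpose (matrix_inv A) ** A = mat 1"
    using minv(1)[OF assms(1)] assms(2) by (metis matrix_transpose_mul transpose_mat)
  hence "transpose (matrix_inv A) = (transpose (matrix_inv A) ** A) ** matrix_inv A"
    using minv(1)[OF assms(1)] by (metis matrix_mul_assoc matrix_mul_rid)
  thus ?thesis by (simp add: minv(1)[OF assms(1)] \<open>transpose (matrix_inv A) ** A = mat 1\<close>)
qed

definition penrose :: "real^'n^'m \<Rightarrow> real^'m^'n \<Rightarrow> bool" where
  "penrose A X \<longleftrightarrow> A ** X ** A = A \<and> X ** A ** X = X \<and>
                    transpose (A ** X) = A ** X \<and> transpose (X ** A) = X ** A"

lemma penrose_unique:
  assumes X: "penrose A X" and Y: "penrose A Y"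
  shows "X = Y"
proof -
  have X1: "A ** X ** A = A" and X2: "X ** A ** X = X" and X3: "transpose (A ** X) = A ** X"
    and X4: "transpose (X ** A) = X ** A" using X unfolding penrose_def by auto
  have Y1: "A ** Y ** A = A" and Y2: "Y ** A ** Y = Y" and Y3: "transpose (A ** Y) = A ** Y"
    and Y4: "transpose (Y ** A) = Y ** A" using Y unfolding penrose_def by auto
  have "X = X ** (A ** X)" using X2 by (simp add: matrix_mul_assoc)
  also have "\<dots> = X ** transpose (A ** X)" using X3 by simp
  also have "\<dots> = X ** (transpose X ** transpose A)" by (simp add: matrix_transpose_mul)
  also have "transpose A = transpose (A ** Y ** A)" using Y1 by simp
  also have "\<dots> = transpose A ** transpose Y ** transpose A" by (simp add: matrix_transpose_mul matrix_mul_assoc)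
  finally have "X = X ** (transpose (A ** X) ** transpose (A ** Y))"
    by (simp add: matrix_transpose_mul matrix_mul_assoc)
  also have "\<dots> = X ** A ** Y" using X2 X3 Y3 by (simp add: matrix_mul_assoc)
  finally have eX: "X = X ** A ** Y" .
  have "Y = (Y ** A) ** Y" using Y2 by (simp add: matrix_mul_assoc)
  also have "\<dots> = transpose (Y ** A) ** Y" using Y4 by simp
  also have "\<dots> = transpose A ** transpose Y ** Y" by (simp add: matrix_transpose_mul)
  also have "transpose A = transpose (A ** X ** A)" using X1 by simp
  finally have "Y = (transpose (X ** A) ** transpose (Y ** A)) ** Y"
    by (simp add: matrix_transpose_mul matrix_mul_assoc)
  also have "\<dots> = X ** (A ** Y ** A) ** Y" using X4 Y4 by (simp add: matrix_mul_assoc)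
  also have "\<dots> = X ** A ** Y" using Y1 Y2 by (simp add: matrix_mul_assoc)
  finally show ?thesis using eX by simp
qed

lemma pinv_eq: "penrose A X \<Longrightarrow> pinv A = X"
  unfolding pinv_def
  by (rule the_equality) (auto simp: penrose_def[symmetric] intro: penrose_unique)




lemma outer_mv: "outer x *v v = (x \<bullet> v) *\<^sub>R x"
  by (simp add: outer_def matrix_vector_mult_def vec_eq_iff inner_vec_def sum_distrib_left mult_ac)

lemma outer_transpose: "transpose (outer x) = outer x"
  by (simp add: outer_def transpose_def vec_eq_iff mult.commute)

lemma sum_mv: "(\<Sum>i\<in>S. M i) *v (v::real^'n) = (\<Sum>i\<in>S. M i *v v)"
  by (induction S rule: infinite_finite_induct) (auto simp: matrix_vector_mult_add_rdistrib)

lemma scaleR_mv: "(c *\<^sub>R (M::real^'n^'m)) *v v = c *\<^sub>R (M *v v)"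
  by (simp add: matrix_vector_mult_def vec_eq_iff sum_distrib_left mult_ac)

lemma transpose_sum: "transpose (\<Sum>i\<in>S. (M i::real^'n^'m)) = (\<Sum>i\<in>S. transpose (M i))"
  by (induction S rule: infinite_finite_induct) (auto simp: transpose_add transpose_def vec_eq_iff)

lemma pinv_exists_sym:
  fixes A :: "real^'n^'n"
  assumes sym: "transpose A = A"
  shows "\<exists>X. penrose A X \<and> transpose X = X"
proof -
  have "subspace {v. A *v v = 0}"
    by (simp add: subspace_def matrix_vector_right_distrib matrix_vector_mult_scaleR)
  then obtain Bs where Bs: "Bs \<subseteq> {v. A *v v = 0}" "pairwise orthogonal Bs"
    "\<And>x. x \<in> Bs \<Longrightarrow> norm x = 1" "independent Bs" "span Bs = {v. A *v v = 0}"
    by (rule orthonormal_basis_subspace) blast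
  have fin: "finite Bs" using Bs(4) independent_imp_finite by blast
  define Q where "Q = (\<Sum>b\<in>Bs. outer b)"
  have Qv: "Q *v v = (\<Sum>b\<in>Bs. (b \<bullet> v) *\<^sub>R b)" for v
    by (simp add: Q_def sum_mv outer_mv)
  have Qt: "transpose Q = Q" by (simp add: Q_def transpose_sum outer_transpose)
  have bb: "b \<bullet> b' = (if b = b' then 1 else 0)" if "b \<in> Bs" "b' \<in> Bs" for b b'
    using Bs(2,3) that by (auto simp: pairwise_def orthogonal_def norm_eq_1)
  have AQ: "A ** Q = 0"
  proof -
    have "A *v (Q *v v) = 0" for v
      unfolding Qv using Bs(1) by (simp add: matrix_vector_mult_scaleR vec.sum subset_iff)
    thus ?thesis by (simp add: matrix_eq matrix_vector_mul_assoc)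
  qed
  have QA: "Q ** A = 0"
  proof -
    have "transpose (Q ** A) = 0" by (simp add: matrix_transpose_mul Qt sym AQ)
    hence "transpose (transpose (Q ** A)) = transpose (0::real^'n^'n)" by simp
    thus ?thesis by (simp add: transpose_def vec_eq_iff)
  qed
  have QQ: "Q ** Q = Q"
  proof -
    have "Q *v (Q *v v) = Q *v v" for v
    proof -
      have "b \<bullet> (Q *v v) = b \<bullet> v" if "b \<in> Bs" for b
      proof -
        have "b \<bullet> (Q *v v) = (\<Sum>b'\<in>Bs. (b' \<bullet> v) * (b \<bullet> b'))"
          unfolding Qv by (simp add: inner_sum_right)
        also have "\<dots> = (\<Sum>b'\<in>Bs. if b' = b then b \<bullet> v else 0)"
          by (rule sum.cong) (auto simp: bb that inner_commute)
        also have "\<dots> = b \<bullet> v" using fin that by simp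
        finally show ?thesis .
      qed
      thus ?thesis by (simp add: Qv)
    qed
    thus ?thesis by (simp add: matrix_eq matrix_vector_mul_assoc)
  qed
  define C where "C = A + Q"
  have Ct: "transpose C = C" by (simp add: C_def transpose_add sym Qt)
  have Cinv: "invertible C"
  proof (rule invertible_ker)
    fix v assume "C *v v = 0"
    hence "Q *v (C *v v) = 0" by simp
    hence "Q *v v = 0" by (simp add: C_def matrix_vector_right_distrib matrix_vector_mult_add_rdistrib matrix_vector_mul_assoc QA QQ)
    hence Av: "A *v v = 0" using \<open>C *v v = 0\<close> by (simp add: C_def matrix_vector_mult_add_rdistrib)
    have "v \<bullet> (Q *v v) = (\<Sum>b\<in>Bs. (b \<bullet> v)^2)"
      by (simp add: Qv inner_sum_right power2_eq_square inner_commute)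
    hence "(\<Sum>b\<in>Bs. (b \<bullet> v)^2) = 0" using \<open>Q *v v = 0\<close> by simp
    hence "\<forall>b\<in>Bs. (b \<bullet> v)^2 = 0" using fin by (subst (asm) sum_nonneg_eq_0_iff) auto
    hence "\<forall>b\<in>Bs. orthogonal v b" by (simp add: orthogonal_def inner_commute)
    moreover have "v \<in> span Bs" using Bs(5) Av by simp
    ultimately have "orthogonal v v" using orthogonal_to_span by blast
    thus "v = 0" by (simp add: orthogonal_def)
  qed
  define Ci where "Ci = matrix_inv C"
  have CCi: "C ** Ci = mat 1" "Ci ** C = mat 1" using minv[OF Cinv] by (auto simp: Ci_def)
  have Cit: "transpose Ci = Ci" using minv_sym[OF Cinv Ct] by (simp add: Ci_def)
  have QC: "Q ** C = Q" by (simp add: C_def matrix_add_ldistrib QA QQ)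
  have CQ: "C ** Q = Q" by (simp add: C_def mmul_add_right AQ QQ)
  have QCi: "Q ** Ci = Q" by (metis QC CCi(1) matrix_mul_assoc matrix_mul_rid)
  have CiQ: "Ci ** Q = Q" by (metis CQ CCi(2) matrix_mul_assoc matrix_mul_lid)
  define X where "X = Ci - Q"
  have AX: "A ** X = mat 1 - Q"
  proof -
    have "A = C - Q" by (simp add: C_def)
    hence "A ** X = (C - Q) ** Ci - (C - Q) ** Q" by (simp add: X_def mmul_diff_left)
    also have "\<dots> = mat 1 - Q" by (simp add: mmul_diff_right CCi CQ QCi QQ)
    finally show ?thesis .
  qed
  have XA: "X ** A = mat 1 - Q"
  proof -
    have "A = C - Q" by (simp add: C_def)
    hence "X ** A = Ci ** (C - Q) - Q ** (C - Q)" by (simp add: X_def mmul_diff_right)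
    also have "\<dots> = mat 1 - Q" by (simp add: mmul_diff_left CCi QC CiQ QQ)
    finally show ?thesis .
  qed
  have P1: "A ** X ** A = A" by (simp add: AX mmul_diff_right QA)
  have QX: "Q ** X = 0" by (simp add: X_def mmul_diff_left QCi QQ)
  have P2: "X ** A ** X = X"
    by (simp only: XA mmul_diff_right QX) simp
  have P3: "transpose (A ** X) = A ** X" by (simp add: AX transpose_diff Qt)
  have P4: "transpose (X ** A) = X ** A" by (simp add: XA transpose_diff Qt)
  have "transpose X = X" by (simp add: X_def transpose_diff Cit Qt)
  thus ?thesis using P1 P2 P3 P4 unfolding penrose_def by blast
qed

lemma pinv_sym:
  fixes A :: "real^'n^'n"
  assumes "transpose A = A"
  shows "A ** pinv A ** A = A" "transpose (pinv A) = pinv A"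
  using pinv_exists_sym[OF assms] pinv_eq by (auto simp: penrose_def)




lemma mv2: "(P::real^2^2) *v v = vector [P$1$1 * v$1 + P$1$2 * v$2, P$2$1 * v$1 + P$2$2 * v$2]"
  by (simp add: vec_eq_iff forall_2 matrix_vector_mult_def sum_2)

lemma inner2: "(u::real^2) \<bullet> v = u$1 * v$1 + u$2 * v$2"
  by (simp add: inner_vec_def sum_2)

lemma lmax2:
  fixes P :: "real^2^2"
  assumes sym: "transpose P = P"
  shows "w \<bullet> (P *v w) \<le> lambda_max P * (w \<bullet> w)"
proof -
  define a where "a = P$1$1"
  define b where "b = P$1$2"
  define c where "c = P$2$2"
  have "transpose P $ 2 $ 1 = P $ 1 $ 2" by (simp add: transpose_def)
  hence b': "P$2$1 = b" using sym by (simp add: b_def)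
  define t where "t = (a - c) / 2"
  define s where "s = sqrt (t^2 + b^2)"
  define L where "L = (a+c)/2 + s"
  have s0: "s \<ge> 0" by (simp add: s_def)
  have ss: "s^2 = t^2 + b^2" unfolding s_def by simp
  have L1: "L - a = s - t" by (simp add: L_def t_def field_simps)
  have L2: "L - c = s + t" by (simp add: L_def t_def field_simps)
  have "(s - t) * (s + t) = s^2 - t^2" by (simp add: power2_eq_square algebra_simps)
  hence Lab: "(L - a) * (L - c) = b^2" using ss L1 L2 by simp
  have sa: "\<bar>t\<bar> \<le> s" unfolding s_def by (rule real_le_rsqrt) simp
  have La: "L - a \<ge> 0" "L - c \<ge> 0" using sa L1 L2 by auto
  define E where "E = {l. \<exists>v. v \<noteq> 0 \<and> P *v v = l *\<^sub>R v}"
  have Esub: "E \<subseteq> {L, (a+c)/2 - s}"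
  proof
    fix l assume "l \<in> E"
    then obtain v where v: "v \<noteq> 0" "P *v v = l *\<^sub>R v" unfolding E_def by blast
    have e1: "a * v$1 + b * v$2 = l * v$1" and e2: "b * v$1 + c * v$2 = l * v$2"
      using v(2) by (simp_all add: mv2 vec_eq_iff forall_2 a_def b_def c_def b')
    have d1: "((a-l)*(c-l) - b^2) * v$1 = 0" using e1 e2 by algebra
    have d2: "((a-l)*(c-l) - b^2) * v$2 = 0" using e1 e2 by algebra
    have "v$1 \<noteq> 0 \<or> v$2 \<noteq> 0" using v(1) by (auto simp: vec_eq_iff forall_2)
    hence det: "(a-l)*(c-l) = b^2" using d1 d2 by auto
    have "(l - (a+c)/2)^2 - t^2 = (a-l)*(c-l)" by (simp add: t_def power2_eq_square field_simps)
    hence "(l - (a+c)/2)^2 = s^2" using ss det by simp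
    hence "l - (a+c)/2 = s \<or> l - (a+c)/2 = - s" by (simp add: power2_eq_iff)
    thus "l \<in> {L, (a+c)/2 - s}" unfolding L_def by auto
  qed
  have LE: "L \<in> E"
  proof -
    have ev1: "P *v vector [b, L - a] = L *\<^sub>R vector [b, L - a]"
      using Lab by (simp add: mv2 vec_eq_iff forall_2 a_def[symmetric] b_def[symmetric] c_def[symmetric] b'
          algebra_simps power2_eq_square)
    have ev2: "P *v vector [L - c, b] = L *\<^sub>R vector [L - c, b]"
      using Lab by (simp add: mv2 vec_eq_iff forall_2 a_def[symmetric] b_def[symmetric] c_def[symmetric] b'
          algebra_simps power2_eq_square)
    show ?thesis
    proof (cases "b \<noteq> 0 \<or> L \<noteq> a")
      case True
      hence "vector [b, L - a] \<noteq> (0::real^2)" by (auto simp: vec_eq_iff forall_2)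
      thus ?thesis using ev1 unfolding E_def by blast
    next
      case F: False
      show ?thesis
      proof (cases "L \<noteq> c")
        case True
        hence "vector [L - c, b] \<noteq> (0::real^2)" by (auto simp: vec_eq_iff forall_2)
        thus ?thesis using ev2 unfolding E_def by blast
      next
        case False
        hence "P *v vector [1, 0] = L *\<^sub>R vector [1, 0]" using F
          by (simp add: mv2 vec_eq_iff forall_2 a_def[symmetric] b_def[symmetric] c_def[symmetric] b')
        moreover have "vector [1, 0] \<noteq> (0::real^2)" by (auto simp: vec_eq_iff forall_2)
        ultimately show ?thesis unfolding E_def by blast
      qed
    qed
  qed
  have "L \<le> lambda_max P"
    unfolding lambda_max_def E_def[symmetric]
    using LE Esub by (intro Max_ge) (auto intro: finite_subset)
  moreover have "w \<bullet> (P *v w) \<le> L * (w \<bullet> w)"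
  proof -
    define p where "p = L - a"
    define q where "q = L - c"
    have pq: "p * q = b^2" "p \<ge> 0" "q \<ge> 0" using Lab La by (auto simp: p_def q_def)
    have "0 \<le> p * (w$1)^2 - 2 * b * w$1 * w$2 + q * (w$2)^2"
    proof (cases "p = 0")
      case True
      then show ?thesis using pq by (simp)
    next
      case False
      hence "p > 0" using pq by simp
      have "p * (p * (w$1)^2 - 2 * b * w$1 * w$2 + q * (w$2)^2) = (p * w$1 - b * w$2)^2"
        using pq(1) by (simp add: algebra_simps power2_eq_square)
      hence "p * (p * (w$1)^2 - 2 * b * w$1 * w$2 + q * (w$2)^2) \<ge> 0" by simp
      thus ?thesis using \<open>p > 0\<close> by (simp add: zero_le_mult_iff)
    qed
    thus ?thesis
      by (simp add: mv2 inner2 a_def[symmetric] b_def[symmetric] c_def[symmetric] b' p_def q_def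
          algebra_simps power2_eq_square)
  qed
  moreover have "w \<bullet> w \<ge> 0" by simp
  ultimately show ?thesis by (meson mult_right_mono order_trans)
qed




lemma trace_scaleR: "trace (c *\<^sub>R (A::real^'n^'n)) = c * trace A"
  by (simp add: trace_def sum_distrib_left)

lemma trace_mul_sum:
  "trace ((A::real^'n^'n) ** (\<Sum>i\<in>I. d i *\<^sub>R M i)) = (\<Sum>i\<in>I. d i * trace (A ** M i))"
proof (induction I rule: infinite_finite_induct)
  case (insert x F)
  have "trace ((d x *\<^sub>R A) ** M x) = d x * trace (A ** M x)"
    by (simp add: trace_def matrix_matrix_mult_def sum_distrib_left mult_ac)
  then show ?case using insert by (simp add: matrix_add_ldistrib trace_add matrix_scalar_ac)
qed (auto simp: trace_0[simplified])

lemma trace_outer: "trace ((A::real^'n^'n) ** outer u) = u \<bullet> (A *v u)"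
  by (simp add: trace_def outer_def matrix_matrix_mult_def matrix_vector_mult_def inner_vec_def
      sum_distrib_left sum_distrib_right mult_ac)

lemma form_mv: "(\<Sum>i\<in>I. d i *\<^sub>R outer (u i)) *v (x::real^'n) = (\<Sum>i\<in>I. (d i * (u i \<bullet> x)) *\<^sub>R u i)"
  by (simp add: sum_mv scaleR_mv outer_mv)

lemma form_quad: "x \<bullet> ((\<Sum>i\<in>I. d i *\<^sub>R outer (u i)) *v (x::real^'n)) = (\<Sum>i\<in>I. d i * (u i \<bullet> x)^2)"
  by (simp add: form_mv inner_sum_right power2_eq_square inner_commute mult_ac)

lemma form_nonneg: "(\<And>i. d i \<ge> 0) \<Longrightarrow> x \<bullet> ((\<Sum>i\<in>I. d i *\<^sub>R outer (u i)) *v (x::real^'n)) \<ge> 0"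
  by (simp add: form_quad sum_nonneg)

lemma form_sym: "transpose (\<Sum>i\<in>I. d i *\<^sub>R outer (u i)) = (\<Sum>i\<in>I. d i *\<^sub>R outer (u i :: real^'n))"
  by (simp add: transpose_sum transpose_scalar outer_transpose)

lemma key:
  fixes S N :: "real^'m^'m" and u :: "'i::finite \<Rightarrow> real^'m" and b :: "'c::finite \<Rightarrow> real^'m"
  assumes S: "S = (\<Sum>i\<in>UNIV. d i *\<^sub>R outer (u i))" and d: "\<And>i. d i \<ge> 0"
    and N: "N = (\<Sum>c\<in>UNIV. w c *\<^sub>R outer (b c))" and w: "\<And>c. w c \<ge> 0"
  shows "(N *v y) \<bullet> (S *v (N *v y)) \<le> trace (N ** S) * (y \<bullet> (N *v y))"
    and "trace (N ** S) \<ge> 0"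
proof -
  define p where "p c = b c \<bullet> y" for c
  define q where "q i c = u i \<bullet> b c" for i c
  have tr: "trace (N ** S) = (\<Sum>i\<in>UNIV. d i * (\<Sum>c\<in>UNIV. w c * (q i c)^2))"
    unfolding S trace_mul_sum trace_outer N form_quad q_def by (simp add: inner_commute)
  have yNy: "y \<bullet> (N *v y) = (\<Sum>c\<in>UNIV. w c * (p c)^2)"
    unfolding N form_quad p_def ..
  have uNy: "u i \<bullet> (N *v y) = (\<Sum>c\<in>UNIV. w c * p c * q i c)" for i
    unfolding N form_mv p_def q_def by (simp add: inner_sum_right mult_ac)
  have lhs: "(N *v y) \<bullet> (S *v (N *v y)) = (\<Sum>i\<in>UNIV. d i * (\<Sum>c\<in>UNIV. w c * p c * q i c)^2)"
    unfolding S form_quad uNy ..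
  have cs: "(\<Sum>c\<in>UNIV. w c * p c * q i c)^2 \<le> (\<Sum>c\<in>UNIV. w c * (q i c)^2) * (\<Sum>c\<in>UNIV. w c * (p c)^2)" for i
  proof -
    have "(\<Sum>c\<in>UNIV. (sqrt (w c) * p c) * (sqrt (w c) * q i c))^2
          \<le> (\<Sum>c\<in>UNIV. (sqrt (w c) * p c)^2) * (\<Sum>c\<in>UNIV. (sqrt (w c) * q i c)^2)"
      by (rule Cauchy_Schwarz_ineq_sum)
    moreover have "(\<Sum>c\<in>UNIV. (sqrt (w c) * p c) * (sqrt (w c) * q i c)) = (\<Sum>c\<in>UNIV. w c * p c * q i c)"
      by (rule sum.cong) (use w in \<open>auto simp: algebra_simps\<close>)
    moreover have "(\<Sum>c\<in>UNIV. (sqrt (w c) * p c)^2) = (\<Sum>c\<in>UNIV. w c * (p c)^2)"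
      by (rule sum.cong) (use w in \<open>auto simp: power_mult_distrib\<close>)
    moreover have "(\<Sum>c\<in>UNIV. (sqrt (w c) * q i c)^2) = (\<Sum>c\<in>UNIV. w c * (q i c)^2)"
      by (rule sum.cong) (use w in \<open>auto simp: power_mult_distrib\<close>)
    ultimately show ?thesis by (simp only: mult.commute)
  qed
  have "(N *v y) \<bullet> (S *v (N *v y)) \<le> (\<Sum>i\<in>UNIV. d i * ((\<Sum>c\<in>UNIV. w c * (q i c)^2) * (\<Sum>c\<in>UNIV. w c * (p c)^2)))"
    unfolding lhs by (intro sum_mono mult_left_mono cs d)
  also have "\<dots> = trace (N ** S) * (y \<bullet> (N *v y))"
    unfolding tr yNy by (simp only: sum_distrib_right mult.assoc)
  finally show "(N *v y) \<bullet> (S *v (N *v y)) \<le> trace (N ** S) * (y \<bullet> (N *v y))" .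
  show "trace (N ** S) \<ge> 0" unfolding tr using d w by (intro sum_nonneg mult_nonneg_nonneg) auto
qed

lemma mv_axis: "((S::real^'m^'m) *v axis k 1)$j = S$j$k"
  unfolding matrix_vector_mult_def axis_def by (simp add: if_distrib[where f="\<lambda>x. _ * x"] cong: if_cong)

lemma quad2: "(a *\<^sub>R axis j 1 + b *\<^sub>R axis k 1) \<bullet> ((S::real^'m^'m) *v (a *\<^sub>R axis j 1 + b *\<^sub>R axis k 1))
   = a^2 * S$j$j + a * b * (S$j$k + S$k$j) + b^2 * S$k$k"
  by (simp add: inner_add_left inner_add_right matrix_vector_right_distrib matrix_vector_mult_scaleR
      inner_axis' mv_axis algebra_simps power2_eq_square)

lemma Emat_mv: "j \<noteq> k \<Longrightarrow> Emat j k *v vector [a, b] = a *\<^sub>R axis j 1 + b *\<^sub>R axis k (1::real)"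
  by (simp add: vec_eq_iff Emat_def matrix_vector_mult_def sum_2 axis_def)

lemma inner_transpose_mv: "(a::real^'n) \<bullet> (transpose E *v v) = (E *v a) \<bullet> v"
  by (metis dot_lmul_matrix inner_commute transpose_matrix_vector)

lemma core:
  fixes S N X :: "real^'m^'m" and u :: "'i::finite \<Rightarrow> real^'m" and b :: "'c::finite \<Rightarrow> real^'m"
  assumes S: "S = (\<Sum>i\<in>UNIV. d i *\<^sub>R outer (u i))" and d: "\<And>i. d i \<ge> 0"
    and N: "N = (\<Sum>c\<in>UNIV. w c *\<^sub>R outer (b c))" and w: "\<And>c. w c \<ge> 0"
    and NXN: "N ** X ** N = N" and Xt: "transpose X = X"
    and ej: "axis j 1 \<in> range (\<lambda>x. N *v x)" and ek: "axis k 1 \<in> range (\<lambda>x. N *v x)"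
    and jk: "j \<noteq> k"
  shows "\<bar>S$j$k\<bar> \<le> trace (N ** S) / 2 * lambda_max (transpose (Emat j k) ** X ** Emat j k)"
    and "lambda_max (transpose (Emat j k) ** X ** Emat j k) \<ge> 0"
proof -
  define T where "T = trace (N ** S)"
  define P where "P = transpose (Emat j k) ** X ** Emat j k"
  define R where "R = lambda_max P"
  have T0: "T \<ge> 0" unfolding T_def by (rule key(2)[OF S d N w])
  have Nt: "transpose N = N" unfolding N by (rule form_sym)
  have St: "transpose S = S" unfolding S by (rule form_sym)
  have Pt: "transpose P = P" unfolding P_def by (simp add: matrix_transpose_mul Xt matrix_mul_assoc)
  obtain yj yk where yj: "N *v yj = axis j 1" and yk: "N *v yk = axis k 1" using ej ek by (metis rangeE)
  have bound: "((1/2) *\<^sub>R axis j 1 + (s/2) *\<^sub>R axis k 1) \<bullet> (S *v ((1/2) *\<^sub>R axis j 1 + (s/2) *\<^sub>R axis k 1)) \<le> T * R / 2 \<and> R \<ge> 0"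
    if s: "s = 1 \<or> s = -1" for s :: real
  proof -
    define x where "x = (1/2) *\<^sub>R axis j 1 + (s/2) *\<^sub>R axis k (1::real)"
    define y where "y = (1/2) *\<^sub>R yj + (s/2) *\<^sub>R yk"
    have xy: "N *v y = x" by (simp add: y_def x_def matrix_vector_right_distrib matrix_vector_mult_scaleR yj yk)
    have k1: "x \<bullet> (S *v x) \<le> T * (y \<bullet> x)" using key(1)[OF S d N w, of y] unfolding xy T_def .
    have "x \<bullet> (X *v x) = y \<bullet> (transpose N *v (X *v (N *v y)))"
      by (simp only: inner_transpose_mv xy)
    also have "\<dots> = y \<bullet> x"
    proof -
      have "N *v (X *v (N *v y)) = N *v y" by (simp only: matrix_vector_mul_assoc matrix_mul_assoc NXN)
      thus ?thesis by (simp only: Nt xy)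
    qed
    finally have yx: "y \<bullet> x = x \<bullet> (X *v x)" by simp
    define om where "om = (vector [1/2, s/2] :: real^2)"
    have xE: "Emat j k *v om = x" unfolding om_def x_def by (rule Emat_mv[OF jk])
    have "x \<bullet> (X *v x) = om \<bullet> (P *v om)"
      unfolding P_def by (simp only: matrix_vector_mul_assoc[symmetric] inner_transpose_mv xE)
    also have "\<dots> \<le> R * (om \<bullet> om)" unfolding R_def by (rule lmax2[OF Pt])
    also have "om \<bullet> om = 1/2" using s by (auto simp: om_def inner2)
    finally have xX: "x \<bullet> (X *v x) \<le> R / 2" by simp
    have yx0: "y \<bullet> x \<ge> 0" unfolding xy[symmetric] N by (rule form_nonneg[OF w])
    have "x \<bullet> (S *v x) \<le> T * (R / 2)"
    proof -
      have "T * (y \<bullet> x) \<le> T * (R / 2)" using yx xX T0 by (intro mult_left_mono) auto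
      thus ?thesis using k1 by linarith
    qed
    moreover have "R \<ge> 0" using yx0 yx xX by linarith
    ultimately show ?thesis by (simp add: x_def)
  qed
  have q1: "((1/2) *\<^sub>R axis j 1 + (1/2) *\<^sub>R axis k 1) \<bullet> (S *v ((1/2) *\<^sub>R axis j 1 + (1/2) *\<^sub>R axis k 1))
      = (S$j$j + 2 * S$j$k + S$k$k) / 4"
    using St unfolding quad2 by (simp add: power2_eq_square) (metis transpose_def vec_lambda_beta)
  have q2: "((1/2) *\<^sub>R axis j 1 + ((-1)/2) *\<^sub>R axis k 1) \<bullet> (S *v ((1/2) *\<^sub>R axis j 1 + ((-1)/2) *\<^sub>R axis k 1))
      = (S$j$j - 2 * S$j$k + S$k$k) / 4"
    using St unfolding quad2 by (simp add: power2_eq_square) (metis transpose_def vec_lambda_beta)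
  have n1: "((1/2) *\<^sub>R axis j 1 + (1/2) *\<^sub>R axis k 1) \<bullet> (S *v ((1/2) *\<^sub>R axis j 1 + (1/2) *\<^sub>R axis k (1::real))) \<ge> 0"
    unfolding S by (rule form_nonneg[OF d])
  have n2: "((1/2) *\<^sub>R axis j 1 + ((-1)/2) *\<^sub>R axis k 1) \<bullet> (S *v ((1/2) *\<^sub>R axis j 1 + ((-1)/2) *\<^sub>R axis k (1::real))) \<ge> 0"
    unfolding S by (rule form_nonneg[OF d])
  note b1 = bound[of 1] and b2 = bound[of "-1"]
  show "\<bar>S$j$k\<bar> \<le> trace (N ** S) / 2 * lambda_max (transpose (Emat j k) ** X ** Emat j k)"
    using b1 b2 n1 n2 unfolding q1 q2 T_def[symmetric] R_def P_def[symmetric] by auto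
  show "lambda_max (transpose (Emat j k) ** X ** Emat j k) \<ge> 0" using b1 unfolding R_def P_def by auto
qed




lemma NN_form: "NN B g w = (\<Sum>c\<in>UNIV. w (g c) *\<^sub>R outer (column c B))"
proof -
  have "(NN B g w)$a$b = (\<Sum>c\<in>UNIV. w (g c) * (B$a$c * B$b$c))" for a b
  proof -
    have "(NN B g w)$a$b = (\<Sum>l\<in>UNIV. \<Sum>c\<in>UNIV. if g c = l then w l * (B$a$c * B$b$c) else 0)"
      by (simp add: NN_def blk_def matrix_matrix_mult_def transpose_def sum_distrib_left if_distrib
          cong: if_cong)
    also have "\<dots> = (\<Sum>c\<in>UNIV. \<Sum>l\<in>UNIV. if g c = l then w l * (B$a$c * B$b$c) else 0)"
      by (rule sum.swap)
    also have "\<dots> = (\<Sum>c\<in>UNIV. w (g c) * (B$a$c * B$b$c))"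
      by (simp add: sum.delta)
    finally show ?thesis .
  qed
  thus ?thesis by (simp add: vec_eq_iff outer_def column_def)
qed

lemma BBt_form: "B ** transpose B = (\<Sum>c\<in>UNIV. 1 *\<^sub>R outer (column c (B::real^'c::finite^'m)))"
  by (simp add: vec_eq_iff outer_def column_def matrix_matrix_mult_def transpose_def)

lemma BBt_NN: "B ** transpose B = NN B (g::'c::finite \<Rightarrow> 'k::finite) (\<lambda>_. 1)"
  by (simp add: BBt_form NN_form)

lemma trace_NN:
  fixes M :: "real^'m^'m" and g :: "'c::finite \<Rightarrow> 'k::finite"
  assumes w: "\<And>l. w l \<ge> 0"
  shows "trace (NN B g w ** matrix_inv M) \<le> (\<Sum>l\<in>UNIV. w l) * PhiB B g M"
proof -
  define S where "S = matrix_inv M"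
  have "trace (NN B g w ** S) = trace (S ** NN B g w)" by (rule trace_mul_sym)
  also have "\<dots> = (\<Sum>l\<in>UNIV. w l * trace (S ** (blk B g l ** transpose (blk B g l))))"
    unfolding NN_def by (rule trace_mul_sum)
  also have "\<dots> = (\<Sum>l\<in>UNIV. w l * trace (transpose (blk B g l) ** S ** blk B g l))"
  proof (rule sum.cong)
    fix l
    have "trace ((S ** blk B g l) ** transpose (blk B g l)) = trace (transpose (blk B g l) ** (S ** blk B g l))"
      by (rule trace_mul_sym)
    thus "w l * trace (S ** (blk B g l ** transpose (blk B g l))) = w l * trace (transpose (blk B g l) ** S ** blk B g l)"
      by (simp only: matrix_mul_assoc)
  qed simp
  also have "\<dots> \<le> (\<Sum>l\<in>UNIV. w l * PhiB B g M)"
    unfolding PhiB_def S_def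
    by (intro sum_mono mult_left_mono w Max_ge) auto
  also have "\<dots> = (\<Sum>l\<in>UNIV. w l) * PhiB B g M" by (simp add: sum_distrib_right)
  finally show ?thesis by (simp add: S_def)
qed

lemma ker_col:
  fixes b :: "'c::finite \<Rightarrow> real^'m"
  assumes "\<And>c. w c \<ge> 0" "(\<Sum>c\<in>UNIV. w c *\<^sub>R outer (b c)) *v z = 0" "w c > 0"
  shows "b c \<bullet> z = 0"
proof -
  have "(\<Sum>c\<in>UNIV. w c * (b c \<bullet> z)^2) = 0" using assms(2) form_quad[of z w b UNIV] by simp
  hence "\<forall>c\<in>UNIV. w c * (b c \<bullet> z)^2 = 0" using assms(1) by (subst (asm) sum_nonneg_eq_0_iff) auto
  hence "w c * (b c \<bullet> z)^2 = 0" by simp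
  thus ?thesis using assms(3) by simp
qed

lemma range_char:
  fixes N :: "real^'m^'m"
  assumes sym: "transpose N = N" and orth: "\<And>z. N *v z = 0 \<Longrightarrow> v \<bullet> z = 0"
  shows "v \<in> range (\<lambda>x. N *v x)"
proof -
  obtain X where X: "penrose N X" "transpose X = X" using pinv_exists_sym[OF sym] by blast
  have NXN: "N ** X ** N = N" and NX: "transpose (N ** X) = N ** X" using X unfolding penrose_def by auto
  define r where "r = v - N *v (X *v v)"
  have "N *v r = 0"
  proof -
    have "N ** (N ** X) = N ** transpose (N ** X)" by (simp only: NX)
    also have "\<dots> = N ** X ** N" by (simp only: matrix_transpose_mul X(2) sym matrix_mul_assoc)
    finally have "N ** (N ** X) = N" by (simp only: NXN)
    hence "N *v (N *v (X *v v)) = N *v v" by (simp only: matrix_vector_mul_assoc)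
    thus ?thesis by (simp add: r_def matrix_vector_mult_diff_distrib)
  qed
  hence "v \<bullet> r = 0" by (rule orth)
  moreover have "(N *v (X *v v)) \<bullet> r = 0"
    using \<open>N *v r = 0\<close> by (metis inner_transpose_mv sym inner_zero_right)
  ultimately have "r \<bullet> r = 0" by (simp add: r_def inner_diff_left)
  hence "v = N *v (X *v v)" by (simp add: r_def)
  thus ?thesis by blast
qed




lemma mv_sum: "(A::real^'n^'m) *v (\<Sum>i\<in>I. x i) = (\<Sum>i\<in>I. A *v x i)"
  by (induction I rule: infinite_finite_induct) (auto simp: matrix_vector_right_distrib)

lemma inv_form:
  fixes f :: "'i::finite \<Rightarrow> real^'m"
  assumes inv: "invertible (info_mat f d)"
  shows "matrix_inv (info_mat f d) = (\<Sum>i\<in>UNIV. d i *\<^sub>R outer (matrix_inv (info_mat f d) *v f i))"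
proof -
  define M where "M = info_mat f d"
  define S where "S = matrix_inv M"
  have Mf: "M = (\<Sum>i\<in>UNIV. d i *\<^sub>R outer (f i))" by (simp add: M_def info_mat_def)
  have Mt: "transpose M = M" unfolding Mf by (rule form_sym)
  have St: "transpose S = S" unfolding S_def using minv_sym[OF inv[folded M_def] Mt] .
  have SM: "S ** M = mat 1" using minv(2)[OF inv[folded M_def]] by (simp add: S_def)
  have "S = S ** M ** S" by (simp add: SM)
  also have "\<dots> = (\<Sum>i\<in>UNIV. d i *\<^sub>R outer (S *v f i))"
  proof (subst matrix_eq, intro allI)
    fix v
    have fs: "f i \<bullet> (S *v v) = (S *v f i) \<bullet> v" for i
      using inner_transpose_mv[of "f i" S v] St by simp
    have "(S ** M ** S) *v v = S *v (M *v (S *v v))" by (simp only: matrix_vector_mul_assoc matrix_mul_assoc)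
    also have "\<dots> = (\<Sum>i\<in>UNIV. (d i * (f i \<bullet> (S *v v))) *\<^sub>R (S *v f i))"
      unfolding Mf form_mv mv_sum by (simp add: matrix_vector_mult_scaleR)
    also have "\<dots> = (\<Sum>i\<in>UNIV. d i *\<^sub>R outer (S *v f i)) *v v"
      unfolding form_mv fs ..
    finally show "(S ** M ** S) *v v = (\<Sum>i\<in>UNIV. d i *\<^sub>R outer (S *v f i)) *v v" .
  qed
  finally show ?thesis by (simp add: S_def M_def)
qed

lemma pinv_surj:
  fixes B :: "real^'c::finite^'m"
  assumes inv: "invertible (B ** transpose B)"
  shows "B ** pinv B = mat 1"
proof -
  define G where "G = B ** transpose B"
  define Gi where "Gi = matrix_inv G"
  have Gt: "transpose G = G" by (simp add: G_def matrix_transpose_mul)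
  have Git: "transpose Gi = Gi" using minv_sym[OF inv[folded G_def] Gt] by (simp add: Gi_def)
  have GGi: "G ** Gi = mat 1" using minv(1)[OF inv[folded G_def]] by (simp add: Gi_def)
  define X where "X = transpose B ** Gi"
  have BX: "B ** X = mat 1" using GGi by (simp add: X_def G_def matrix_mul_assoc)
  have "penrose B X"
    unfolding penrose_def
  proof (intro conjI)
    show "B ** X ** B = B" by (simp add: BX)
    show "X ** B ** X = X" by (simp add: BX flip: matrix_mul_assoc)
    show "transpose (B ** X) = B ** X" by (simp add: BX)
    show "transpose (X ** B) = X ** B" by (simp add: X_def matrix_transpose_mul Git matrix_mul_assoc)
  qed
  thus ?thesis using pinv_eq BX by metis
qed

lemma BBt_inv:
  fixes B :: "real^'c::finite^'m"
  assumes surj: "range (\<lambda>x. B *v x) = UNIV"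
  shows "invertible (B ** transpose B)"
proof (rule invertible_ker)
  fix v assume v0: "(B ** transpose B) *v v = 0"
  have "B *v (transpose B *v v) = 0" using v0 by (simp only: matrix_vector_mul_assoc)
  moreover have "(transpose B *v v) \<bullet> (transpose B *v v) = v \<bullet> (transpose (transpose B) *v (transpose B *v v))"
    by (rule inner_transpose_mv[symmetric])
  ultimately have "(transpose B *v v) \<bullet> (transpose B *v v) = 0" by (simp only: transpose_transpose inner_zero_right)
  hence Bv: "transpose B *v v = 0" by (simp only: inner_eq_zero_iff)
  obtain x where xv: "v = B *v x" using surj by (metis UNIV_I image_iff)
  have "x \<bullet> (transpose B *v v) = (B *v x) \<bullet> v" by (rule inner_transpose_mv)
  hence "v \<bullet> v = 0" using Bv xv by simp
  thus "v = 0" by simp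
qed

lemma Bh_inner: "(B *v h) \<bullet> z = (\<Sum>c\<in>UNIV. h$c * (column c B \<bullet> z))"
proof -
  have "(B *v h) \<bullet> z = (\<Sum>a\<in>UNIV. \<Sum>c\<in>UNIV. h$c * (B$a$c * z$a))"
    by (simp add: inner_vec_def matrix_vector_mult_def sum_distrib_left mult_ac)
  also have "\<dots> = (\<Sum>c\<in>UNIV. \<Sum>a\<in>UNIV. h$c * (B$a$c * z$a))" by (rule sum.swap)
  also have "\<dots> = (\<Sum>c\<in>UNIV. h$c * (column c B \<bullet> z))"
    by (simp add: inner_vec_def column_def sum_distrib_left mult_ac)
  finally show ?thesis .
qed

lemma range_from_B:
  fixes B :: "real^'c::finite^'m"
  assumes w: "\<And>c. w c \<ge> 0" and h: "\<And>c. h$c \<noteq> 0 \<Longrightarrow> w c > 0"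
  shows "B *v h \<in> range (\<lambda>x. (\<Sum>c\<in>UNIV. w c *\<^sub>R outer (column c B)) *v x)"
proof (rule range_char)
  show "transpose (\<Sum>c\<in>UNIV. w c *\<^sub>R outer (column c B)) = (\<Sum>c\<in>UNIV. w c *\<^sub>R outer (column c B))"
    by (rule form_sym)
  fix z assume z: "(\<Sum>c\<in>UNIV. w c *\<^sub>R outer (column c B)) *v z = 0"
  have hc: "h$c * (column c B \<bullet> z) = 0" for c
  proof (cases "h$c = 0")
    case False
    then show ?thesis using ker_col[of w "\<lambda>c. column c B" z c, OF w z h[OF False]] by simp
  qed simp
  show "(B *v h) \<bullet> z = 0" unfolding Bh_inner by (intro sum.neutral ballI hc)
qed

lemma range_sub:
  fixes b :: "'c::finite \<Rightarrow> real^'m"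
  assumes w: "\<And>c. w c \<ge> 0" and w': "\<And>c. w' c \<ge> 0" and pos: "\<And>c. w' c > 0 \<Longrightarrow> w c > 0"
    and e: "e \<in> range (\<lambda>x. (\<Sum>c\<in>UNIV. w' c *\<^sub>R outer (b c)) *v x)"
  shows "e \<in> range (\<lambda>x. (\<Sum>c\<in>UNIV. w c *\<^sub>R outer (b c)) *v x)"
proof (rule range_char)
  show "transpose (\<Sum>c\<in>UNIV. w c *\<^sub>R outer (b c)) = (\<Sum>c\<in>UNIV. w c *\<^sub>R outer (b c))"
    by (rule form_sym)
  fix z assume z: "(\<Sum>c\<in>UNIV. w c *\<^sub>R outer (b c)) *v z = 0"
  have hc: "(w' c * (b c \<bullet> z)) *\<^sub>R b c = 0" for c
  proof (cases "w' c > 0")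
    case True
    then show ?thesis using ker_col[of w b z c, OF w z pos[OF True]] by simp
  next
    case False
    then show ?thesis using w'[of c] by simp
  qed
  have kz: "(\<Sum>c\<in>UNIV. w' c *\<^sub>R outer (b c)) *v z = 0" unfolding form_mv by (intro sum.neutral ballI hc)
  obtain y where y: "e = (\<Sum>c\<in>UNIV. w' c *\<^sub>R outer (b c)) *v y" using e by blast
  have "e \<bullet> z = y \<bullet> (transpose (\<Sum>c\<in>UNIV. w' c *\<^sub>R outer (b c)) *v z)"
    unfolding y by (rule inner_transpose_mv[symmetric])
  thus "e \<bullet> z = 0" unfolding form_sym kz by simp
qed




lemma wplus_props:
  fixes B :: "real^'c::finite^'m" and g :: "'c \<Rightarrow> 'k::finite"
  assumes surj: "range (\<lambda>x. B *v x) = UNIV"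
  shows "\<And>l. wplus B g j l \<ge> 0" "(\<Sum>l\<in>UNIV. wplus B g j l) = 1"
    "\<And>c. (pinv B *v axis j 1)$c \<noteq> 0 \<Longrightarrow> wplus B g j (g c) > 0"
    "B *v (pinv B *v axis j 1) = axis j 1"
proof -
  define h where "h = pinv B *v axis j (1::real)"
  define nrm where "nrm l = sqrt (\<Sum>c\<in>{c. g c = l}. (h$c)^2)" for l
  define D where "D = (\<Sum>t\<in>UNIV. nrm t)"
  have wp: "wplus B g j = (\<lambda>l. nrm l / D)"
    by (simp add: wplus_def Let_def h_def nrm_def D_def)
  show Bh: "B *v (pinv B *v axis j 1) = axis j 1"
    using pinv_surj[OF BBt_inv[OF surj]] by (simp add: matrix_vector_mul_assoc)
  have nn: "nrm l \<ge> 0" for l by (simp add: nrm_def sum_nonneg)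
  have npos: "nrm (g c) > 0" if "h$c \<noteq> 0" for c
  proof -
    have "(h$c)^2 \<le> (\<Sum>c'\<in>{c'. g c' = g c}. (h$c')^2)"
      by (rule member_le_sum) auto
    moreover have "(h$c)^2 > 0" using that by simp
    ultimately have "(\<Sum>c'\<in>{c'. g c' = g c}. (h$c')^2) > 0" by linarith
    thus ?thesis by (simp add: nrm_def)
  qed
  have "h \<noteq> 0"
  proof
    assume "h = 0"
    hence "axis j (1::real) = 0" using Bh by (simp add: h_def)
    thus False by (simp add: axis_eq_0_iff)
  qed
  then obtain c0 where c0: "h$c0 \<noteq> 0" by (auto simp: vec_eq_iff)
  have "nrm (g c0) \<le> D" unfolding D_def by (rule member_le_sum) (auto simp: nn)
  hence Dpos: "D > 0" using npos[OF c0] by simp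
  show "\<And>l. wplus B g j l \<ge> 0" using nn Dpos by (simp add: wp)
  show "(\<Sum>l\<in>UNIV. wplus B g j l) = 1" using Dpos by (simp add: wp D_def sum_divide_distrib[symmetric])
  show "\<And>c. (pinv B *v axis j 1)$c \<noteq> 0 \<Longrightarrow> wplus B g j (g c) > 0"
    using npos Dpos by (simp add: wp h_def)
qed

theorem theorem2:
  fixes f :: "'i::finite \<Rightarrow> real^'m::finite"
    and N :: nat
    and B :: "real^'c::finite^'m"
    and g :: "'c \<Rightarrow> 'k::finite"
    and d0 dstar :: "'i \<Rightarrow> real"
    and \<alpha> :: real
    and wj wk :: "'k \<Rightarrow> real"
    and j k :: 'm
  assumes "2 \<le> CARD('m)" and "CARD('m) \<le> N" and "N \<le> CARD('i)"
    and "span (range f) = UNIV"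
    and "surj g"
    and "range (\<lambda>x. B *v x) = UNIV"
    and "\<forall>c. column c B \<noteq> 0"
    and "is_design N d0" and "invertible (info_mat f d0)"
    and "\<alpha> = PhiB B g (info_mat f d0)"
    and "PhiB_optimal f N B g dstar"
    and "is_wstar B g j wj" and "is_wstar B g k wk"
    and "j \<noteq> k"
  shows "\<bar>matrix_inv (info_mat f dstar) $ j $ k\<bar>
           \<le> \<alpha> / 2 * real CARD('k) *
             lambda_max (transpose (Emat j k) ** matrix_inv (B ** transpose B) ** Emat j k)
       \<and> \<bar>matrix_inv (info_mat f dstar) $ j $ k\<bar>
           \<le> \<alpha> / 2 * lambda_max (transpose (Emat j k) **
                 pinv (NN B g (\<lambda>l. (wplus B g j l + wplus B g k l) / 2)) ** Emat j k)
       \<and> \<bar>matrix_inv (info_mat f dstar) $ j $ k\<bar>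
           \<le> \<alpha> / 2 * lambda_max (transpose (Emat j k) **
                 pinv (NN B g (\<lambda>l. (wj l + wk l) / 2)) ** Emat j k)"
proof -
  note surjB = assms(6) and jk = assms(14)
  define M where "M = info_mat f dstar"
  define S where "S = matrix_inv M"
  have opt: "is_design N dstar \<and> invertible M \<and>
     (\<forall>d'. is_design N d' \<and> invertible (info_mat f d') \<longrightarrow>
        PhiB B g M \<le> PhiB B g (info_mat f d'))"
    using assms(11) unfolding PhiB_optimal_def M_def .
  hence des: "is_design N dstar" and Minv: "invertible M" by simp_all
  have "PhiB B g M \<le> PhiB B g (info_mat f d0)" using opt assms(8,9) by blast
  hence PhiM: "PhiB B g M \<le> \<alpha>" using assms(10) by simp
  have dnn: "dstar i \<ge> 0" for i
  proof -
    have "dstar i = 0 \<or> dstar i = 1" using des unfolding is_design_def by blast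
    thus ?thesis by auto
  qed
  have Sf: "S = (\<Sum>i\<in>UNIV. dstar i *\<^sub>R outer ((S *v f i)))"
    unfolding S_def M_def by (rule inv_form[OF Minv[unfolded M_def]])
  have trNN: "trace (NN B g w ** S) \<le> \<alpha>" if w: "\<And>l. w l \<ge> 0" "(\<Sum>l\<in>UNIV. w l) = 1" for w
    using trace_NN[of w B g M, OF w(1)] w(2) PhiM by (simp add: S_def)
  define N1 where "N1 = B ** transpose B"
  have N1inv: "invertible N1" unfolding N1_def by (rule BBt_inv[OF surjB])
  have N1t: "transpose N1 = N1" by (simp add: N1_def matrix_transpose_mul)
  have N1f: "N1 = (\<Sum>c\<in>UNIV. 1 *\<^sub>R outer (column c B))" unfolding N1_def by (rule BBt_form)
  have N1X: "N1 ** matrix_inv N1 ** N1 = N1" using minv[OF N1inv] by simp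
  have N1r: "e \<in> range (\<lambda>x. N1 *v x)" for e
  proof -
    have "N1 *v (matrix_inv N1 *v e) = e" using minv[OF N1inv] by (simp add: matrix_vector_mul_assoc)
    thus ?thesis by (metis rangeI)
  qed
  note C1 = core[OF Sf dnn N1f _ N1X minv_sym[OF N1inv N1t] N1r N1r jk]
  have tr1: "trace (N1 ** S) \<le> real CARD('k) * \<alpha>"
  proof -
    have "trace (N1 ** S) \<le> (\<Sum>l\<in>(UNIV::'k set). 1) * PhiB B g M"
      unfolding N1_def BBt_NN[of B g] S_def using trace_NN[of "\<lambda>_. 1" B g M] by simp
    also have "\<dots> \<le> real CARD('k) * \<alpha>" using PhiM by simp
    finally show ?thesis .
  qed
  have c1: "\<bar>S $ j $ k\<bar> \<le> \<alpha> / 2 * real CARD('k) *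
             lambda_max (transpose (Emat j k) ** matrix_inv (B ** transpose B) ** Emat j k)"
  proof -
    let ?L = "lambda_max (transpose (Emat j k) ** matrix_inv N1 ** Emat j k)"
    have "trace (N1 ** S) / 2 * ?L \<le> (real CARD('k) * \<alpha>) / 2 * ?L"
      using tr1 C1(2) by (intro mult_right_mono) auto
    thus ?thesis using C1(1) by (simp add: N1_def mult_ac)
  qed
  define w2 where "w2 l = (wplus B g j l + wplus B g k l) / 2" for l
  have wpj: "\<And>l. wplus B g j l \<ge> 0" "(\<Sum>l\<in>UNIV. wplus B g j l) = 1"
    "\<And>c. (pinv B *v axis j 1)$c \<noteq> 0 \<Longrightarrow> wplus B g j (g c) > 0"
    "B *v (pinv B *v axis j 1) = axis j 1" using wplus_props[OF surjB] by blast+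
  have wpk: "\<And>l. wplus B g k l \<ge> 0" "(\<Sum>l\<in>UNIV. wplus B g k l) = 1"
    "\<And>c. (pinv B *v axis k 1)$c \<noteq> 0 \<Longrightarrow> wplus B g k (g c) > 0"
    "B *v (pinv B *v axis k 1) = axis k 1" using wplus_props[OF surjB] by blast+
  have w2nn: "\<And>l. w2 l \<ge> 0" using wpj(1) wpk(1) by (simp add: w2_def)
  have w2s: "(\<Sum>l\<in>UNIV. w2 l) = 1" using wpj(2) wpk(2) by (simp add: w2_def sum.distrib sum_divide_distrib[symmetric])
  define N2 where "N2 = NN B g w2"
  have N2f: "N2 = (\<Sum>c\<in>UNIV. w2 (g c) *\<^sub>R outer (column c B))" unfolding N2_def by (rule NN_form)
  have N2t: "transpose N2 = N2" unfolding N2f by (rule form_sym)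
  have N2j: "axis j 1 \<in> range (\<lambda>x. N2 *v x)"
  proof -
    have "B *v (pinv B *v axis j 1) \<in> range (\<lambda>x. N2 *v x)"
      unfolding N2f
    proof (rule range_from_B)
      show "\<And>c. w2 (g c) \<ge> 0" by (rule w2nn)
      show "\<And>c. (pinv B *v axis j 1)$c \<noteq> 0 \<Longrightarrow> w2 (g c) > 0"
        using wpj(3) wpk(1) by (simp add: w2_def add_pos_nonneg)
    qed
    thus ?thesis using wpj(4) by simp
  qed
  have N2k: "axis k 1 \<in> range (\<lambda>x. N2 *v x)"
  proof -
    have "B *v (pinv B *v axis k 1) \<in> range (\<lambda>x. N2 *v x)"
      unfolding N2f
    proof (rule range_from_B)
      show "\<And>c. w2 (g c) \<ge> 0" by (rule w2nn)
      show "\<And>c. (pinv B *v axis k 1)$c \<noteq> 0 \<Longrightarrow> w2 (g c) > 0"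
        using wpk(3) wpj(1) by (simp add: w2_def add_nonneg_pos)
    qed
    thus ?thesis using wpk(4) by simp
  qed
  note C2 = core[OF Sf dnn N2f w2nn pinv_sym[OF N2t] N2j N2k jk]
  have c2: "\<bar>S $ j $ k\<bar> \<le> \<alpha> / 2 * lambda_max (transpose (Emat j k) ** pinv N2 ** Emat j k)"
  proof -
    let ?L = "lambda_max (transpose (Emat j k) ** pinv N2 ** Emat j k)"
    have "trace (N2 ** S) / 2 * ?L \<le> \<alpha> / 2 * ?L"
      using trNN[OF w2nn w2s] C2(2) by (intro mult_right_mono) (auto simp: N2_def)
    thus ?thesis using C2(1) w2nn by simp
  qed
  define w3 where "w3 l = (wj l + wk l) / 2" for l
  have sj: "simplex_wt wj" and rj: "axis j 1 \<in> range (\<lambda>x. NN B g wj *v x)"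
    using assms(12) unfolding is_wstar_def by auto
  have sk: "simplex_wt wk" and rk: "axis k 1 \<in> range (\<lambda>x. NN B g wk *v x)"
    using assms(13) unfolding is_wstar_def by auto
  have wjnn: "\<And>l. wj l \<ge> 0" and wknn: "\<And>l. wk l \<ge> 0" using sj sk by (auto simp: simplex_wt_def)
  have w3nn: "\<And>l. w3 l \<ge> 0" using wjnn wknn by (simp add: w3_def)
  have w3s: "(\<Sum>l\<in>UNIV. w3 l) = 1" using sj sk
    by (simp add: simplex_wt_def w3_def sum.distrib sum_divide_distrib[symmetric])
  define N3 where "N3 = NN B g w3"
  have N3f: "N3 = (\<Sum>c\<in>UNIV. w3 (g c) *\<^sub>R outer (column c B))" unfolding N3_def by (rule NN_form)
  have N3t: "transpose N3 = N3" unfolding N3f by (rule form_sym)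
  have N3j: "axis j 1 \<in> range (\<lambda>x. N3 *v x)"
    unfolding N3f
  proof (rule range_sub[of _ "\<lambda>c. wj (g c)"])
    show "\<And>c. w3 (g c) \<ge> 0" by (rule w3nn)
    show "\<And>c. wj (g c) \<ge> 0" by (rule wjnn)
    show "\<And>c. wj (g c) > 0 \<Longrightarrow> w3 (g c) > 0" using wknn by (simp add: w3_def add_pos_nonneg)
    show "axis j 1 \<in> range (\<lambda>x. (\<Sum>c\<in>UNIV. wj (g c) *\<^sub>R outer (column c B)) *v x)"
      using rj by (simp add: NN_form)
  qed
  have N3k: "axis k 1 \<in> range (\<lambda>x. N3 *v x)"
    unfolding N3f
  proof (rule range_sub[of _ "\<lambda>c. wk (g c)"])
    show "\<And>c. w3 (g c) \<ge> 0" by (rule w3nn)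
    show "\<And>c. wk (g c) \<ge> 0" by (rule wknn)
    show "\<And>c. wk (g c) > 0 \<Longrightarrow> w3 (g c) > 0" using wjnn by (simp add: w3_def add_nonneg_pos)
    show "axis k 1 \<in> range (\<lambda>x. (\<Sum>c\<in>UNIV. wk (g c) *\<^sub>R outer (column c B)) *v x)"
      using rk by (simp add: NN_form)
  qed
  note C3 = core[OF Sf dnn N3f w3nn pinv_sym[OF N3t] N3j N3k jk]
  have c3: "\<bar>S $ j $ k\<bar> \<le> \<alpha> / 2 * lambda_max (transpose (Emat j k) ** pinv N3 ** Emat j k)"
  proof -
    let ?L = "lambda_max (transpose (Emat j k) ** pinv N3 ** Emat j k)"
    have "trace (N3 ** S) / 2 * ?L \<le> \<alpha> / 2 * ?L"
      using trNN[OF w3nn w3s] C3(2) by (intro mult_right_mono) (auto simp: N3_def)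
    thus ?thesis using C3(1) w3nn by simp
  qed
  have Seq: "S = matrix_inv (info_mat f dstar)" by (simp add: S_def M_def)
  have "w2 = (\<lambda>l. (wplus B g j l + wplus B g k l) / 2)" by (rule ext) (simp add: w2_def)
  hence e2: "N2 = NN B g (\<lambda>l. (wplus B g j l + wplus B g k l) / 2)" by (simp add: N2_def)
  have "w3 = (\<lambda>l. (wj l + wk l) / 2)" by (rule ext) (simp add: w3_def)
  hence e3: "N3 = NN B g (\<lambda>l. (wj l + wk l) / 2)" by (simp add: N3_def)
  show ?thesis
    using c1[unfolded Seq] c2[unfolded Seq e2] c3[unfolded Seq e3] by (intro conjI)
qed


end
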